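(* Let $p$ be a prime and let $b$ be an integer with $0<b\le b^{-1}<p$. Let $G$ act on $S=\mathbb{C}[x_1,x_2]$ via $x_1\mapsto\zeta x_1$, $x_2\mapsto\zeta^b x_2$. The following are equivalent: (1) $S^G_{1,b}$ is generated by 4 invariants, i.e. $|\mathrm{inv}_{1,b}|=4$ (equivalently $\operatorname{codim}\ker\varphi_{1,b}=2$); (2) $(p-b)(p-b^{-1})=p+1$.
   Context: Here $\zeta=e^{2\pi i/p}$ and $G=\mathbb{Z}/p\mathbb{Z}=\langle\zeta\rangle$; $S^G_{1,b}$ is the invariant ring, spanned by the monomials $x_1^cx_2^d$ with $c+bd\equiv0\pmod p$. $b^{-1}$ is the unique integer $0<b^{-1}<p$ with $bb^{-1}\equiv1\pmod p$. $\mathrm{inv}_{1,b}$ denotes the minimal set of monomial generators of $S^G_{1,b}$ as a $\mathbb{C}$-algebra: the nonconstant invariant monomials that are not a product of two nonconstant invariant monomials. Writing $\mathrm{inv}_{1,b}=\{z_0,\dots,z_n\}$ in lexicographic order with $x_1>x_2$, let $R=\mathbb{C}[y_0,\dots,y_n]$ with $\deg y_i=\deg z_i$ and $\varphi_{1,b}:R\to S^G_{1,b}$ the $\mathbb{C}$-algebra map $y_i\mapsto z_i$. *)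

theory Defs
  imports "HOL-Computational_Algebra.Primes" "HOL-Number_Theory.Cong"
begin

text \<open>A monomial x1^c x2^d of C[x1,x2] is represented by its exponent vector (c,d).
  It is invariant under the action x1 -> zeta x1, x2 -> zeta^b x2 of Z/pZ iff
  c + b d = 0 (mod p).\<close>

definition invariant_mon :: "nat \<Rightarrow> nat \<Rightarrow> nat \<times> nat \<Rightarrow> bool" where
  "invariant_mon p b m = ([fst m + b * snd m = 0] (mod p))"

definition nonconst_inv :: "nat \<Rightarrow> nat \<Rightarrow> nat \<times> nat \<Rightarrow> bool" where
  "nonconst_inv p b m = (m \<noteq> (0,0) \<and> invariant_mon p b m)"

text \<open>inv_{1,b}: nonconstant invariant monomials that are not a product of two
  nonconstant invariant monomials (product of monomials = sum of exponent vectors).\<close>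

definition inv_gens :: "nat \<Rightarrow> nat \<Rightarrow> (nat \<times> nat) set" where
  "inv_gens p b = {m. nonconst_inv p b m \<and>
      \<not> (\<exists>m1 m2. nonconst_inv p b m1 \<and> nonconst_inv p b m2 \<and>
                 m = (fst m1 + fst m2, snd m1 + snd m2))}"

end

theory Submission
  imports Defs
begin

lemma inv_iff: "invariant_mon p b m \<longleftrightarrow> (int p dvd int (fst m) + int b * int (snd m))"
  unfolding invariant_mon_def cong_0_iff by (metis of_nat_add of_nat_dvd_iff of_nat_mult)

lemma gen_eq:
  assumes "m \<in> inv_gens p b" "nonconst_inv p b X" "fst X \<le> fst m" "snd X \<le> snd m"
  shows "m = X"
proof (rule ccontr)
  assume ne: "m \<noteq> X"
  define Y where "Y = (fst m - fst X, snd m - snd X)"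
  have m: "nonconst_inv p b m" using assms(1) unfolding inv_gens_def by auto
  have "Y \<noteq> (0,0)" using ne assms(3,4) by (auto simp: prod_eq_iff Y_def)
  moreover have "invariant_mon p b Y"
  proof -
    have e: "int (fst Y) + int b * int (snd Y) = (int (fst m) + int b * int (snd m)) - (int (fst X) + int b * int (snd X))"
      using assms(3,4) by (simp add: Y_def of_nat_diff algebra_simps)
    show ?thesis using m assms(2) unfolding nonconst_inv_def inv_iff e by (simp add: dvd_diff)
  qed
  ultimately have Y: "nonconst_inv p b Y" unfolding nonconst_inv_def by simp
  have "m = (fst X + fst Y, snd X + snd Y)" using assms(3,4) by (auto simp: Y_def prod_eq_iff)
  then show False using assms(1,2) Y unfolding inv_gens_def by blast
qed

lemma min_gen:
  assumes "nonconst_inv p b m"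
    and "\<And>X. nonconst_inv p b X \<Longrightarrow> fst X \<le> fst m \<Longrightarrow> snd X \<le> snd m \<Longrightarrow> X = m"
  shows "m \<in> inv_gens p b"
proof -
  have "\<not> (\<exists>m1 m2. nonconst_inv p b m1 \<and> nonconst_inv p b m2 \<and>
                 m = (fst m1 + fst m2, snd m1 + snd m2))"
  proof
    assume "\<exists>m1 m2. nonconst_inv p b m1 \<and> nonconst_inv p b m2 \<and>
                 m = (fst m1 + fst m2, snd m1 + snd m2)"
    then obtain m1 m2 where h: "nonconst_inv p b m1" "nonconst_inv p b m2" "m = (fst m1 + fst m2, snd m1 + snd m2)"
      by blast
    then have "m1 = m" using assms(2)[of m1] by auto
    then have "fst m2 = 0" "snd m2 = 0" using h(3) by (metis add_0_right add_left_cancel fst_conv snd_conv)+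
    then have "m2 = (0,0)" by (simp add: prod_eq_iff)
    with h(2) show False unfolding nonconst_inv_def by simp
  qed
  then show ?thesis using assms(1) unfolding inv_gens_def by blast
qed

lemma dvd_le_eq:
  fixes p x :: int
  assumes "p dvd x" "0 < x" "x \<le> p"
  shows "x = p"
  using zdvd_imp_le[OF assms(1,2)] assms(3) by simp

lemma dvd_small:
  fixes p x :: int
  assumes "p dvd x" "\<bar>x\<bar> < p"
  shows "x = 0"
  using dvd_imp_le_int[of x p] assms by (cases "x = 0") auto

theorem theorem3p5:
  fixes p b binv :: nat
  assumes "prime p"
    and "0 < binv" and "binv < p" and "[b * binv = 1] (mod p)"
    and "0 < b" and "b \<le> binv"
  shows "card (inv_gens p b) = 4 \<longleftrightarrow>
         (int p - int b) * (int p - int binv) = int p + 1"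
proof -
  have p1: "p > 1" using assms(1) prime_gt_1_nat by auto
  have bp: "b < p" using assms by linarith
  define u where "u = p - b"
  define v where "v = p - binv"
  have u1: "1 \<le> u" "u < p" and v1: "1 \<le> v" "v < p" using assms bp unfolding u_def v_def by auto
  have iu: "int u = int p - int b" and iv: "int v = int p - int binv"
    using bp assms(3) unfolding u_def v_def by auto
  obtain t :: int where t: "int b * int binv = 1 + int p * t"
  proof -
    have "[int (b*binv) = int 1] (mod int p)" using assms(4) by (simp only: cong_int_iff)
    then have "int p dvd int b * int binv - 1" by (simp add: cong_iff_dvd_diff dvd_diff_commute)
    then obtain t where "int b * int binv - 1 = int p * t" by (auto elim: dvdE)
    then show ?thesis using that by (auto simp: algebra_simps)
  qed
  have uv: "int u * int v = 1 + int p * (int p - int b - int binv + t)"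
    unfolding iu iv using t by (simp add: algebra_simps)
  have bv: "1 + int b * int v = int p * (int b - t)"
    unfolding iv using t by (simp add: algebra_simps)
  have pnb: "\<not> p dvd b" using bp assms(5) by (auto dest: dvd_imp_le)
  have bd0: "d = 0" if "int p dvd int b * int d" "d < p" for d
  proof -
    have "p dvd b * d" using that(1) by (metis of_nat_dvd_iff of_nat_mult)
    then have "p dvd d" using assms(1) pnb by (simp add: prime_dvd_mult_iff)
    then show ?thesis using that(2) by (auto dest: dvd_imp_le)
  qed
  define A where "A = (p, 0::nat)"
  define B where "B = (0::nat, p)"
  define C where "C = (u, 1::nat)"
  define D where "D = (1::nat, v)"
  have nA: "nonconst_inv p b A" unfolding A_def nonconst_inv_def inv_iff using p1 by auto
  have nB: "nonconst_inv p b B" unfolding B_def nonconst_inv_def inv_iff using p1 by auto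
  have nC: "nonconst_inv p b C" unfolding C_def nonconst_inv_def inv_iff using iu by auto
  have nD: "nonconst_inv p b D" unfolding D_def nonconst_inv_def inv_iff using bv by auto
  have gA: "A \<in> inv_gens p b"
  proof (rule min_gen[OF nA])
    fix X assume X: "nonconst_inv p b X" "fst X \<le> fst A" "snd X \<le> snd A"
    then have "snd X = 0" "int p dvd int (fst X)" "fst X \<noteq> 0" unfolding A_def nonconst_inv_def inv_iff
      by (auto simp: prod_eq_iff)
    then have "int (fst X) = int p" using X(2) unfolding A_def by (intro dvd_le_eq) auto
    then show "X = A" using \<open>snd X = 0\<close> by (auto simp: A_def prod_eq_iff)
  qed
  have gB: "B \<in> inv_gens p b"
  proof (rule min_gen[OF nB])
    fix X assume X: "nonconst_inv p b X" "fst X \<le> fst B" "snd X \<le> snd B"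
    then have "fst X = 0" "int p dvd int b * int (snd X)" "snd X \<noteq> 0" unfolding B_def nonconst_inv_def inv_iff
      by (auto simp: prod_eq_iff)
    then have "snd X = p" using bd0[of "snd X"] X(3) unfolding B_def by force
    then show "X = B" using \<open>fst X = 0\<close> by (auto simp: B_def prod_eq_iff)
  qed
  have gC: "C \<in> inv_gens p b"
  proof (rule min_gen[OF nC])
    fix X assume X: "nonconst_inv p b X" "fst X \<le> fst C" "snd X \<le> snd C"
    then have dv: "int p dvd int (fst X) + int b * int (snd X)" and nz: "X \<noteq> (0,0)"
      unfolding nonconst_inv_def inv_iff by auto
    show "X = C"
    proof (cases "snd X = 0")
      case True
      then have "int p dvd int (fst X)" "0 < int (fst X)" using dv nz by (auto simp: prod_eq_iff)
      then have "int p \<le> int (fst X)" by (rule zdvd_imp_le)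
      then show ?thesis using X(2) u1 unfolding C_def by simp
    next
      case False
      then have s1: "snd X = 1" using X(3) unfolding C_def by simp
      have "int (fst X) + int b * int (snd X) = int p"
        apply (rule dvd_le_eq[OF dv]) using s1 X(2) assms(5) iu unfolding C_def by auto
      then show ?thesis using s1 iu unfolding C_def by (auto simp: prod_eq_iff)
    qed
  qed
  have gD: "D \<in> inv_gens p b"
  proof (rule min_gen[OF nD])
    fix X assume X: "nonconst_inv p b X" "fst X \<le> fst D" "snd X \<le> snd D"
    then have dv: "int p dvd int (fst X) + int b * int (snd X)" and nz: "X \<noteq> (0,0)"
      unfolding nonconst_inv_def inv_iff by auto
    show "X = D"
    proof (cases "fst X = 0")
      case True
      then have "snd X = 0" using bd0[of "snd X"] dv X(3) v1 unfolding D_def by auto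
      then show ?thesis using True nz by (auto simp: prod_eq_iff)
    next
      case False
      then have s1: "fst X = 1" using X(2) unfolding D_def by simp
      have "int p dvd int binv * (int (fst X) + int b * int (snd X))" using dv by simp
      also have "int binv * (int (fst X) + int b * int (snd X)) = int binv + (int b * int binv) * int (snd X)"
        using s1 by (simp add: algebra_simps)
      also have "\<dots> = int binv + int (snd X) + int p * (t * int (snd X))"
        unfolding t by (simp add: algebra_simps)
      finally have "int p dvd int binv + int (snd X)"
        by (metis dvd_add_left_iff dvd_triv_left add.assoc)
      then have "int binv + int (snd X) = int p"
        apply (rule dvd_le_eq) using X(3) iv assms(2) unfolding D_def by auto
      then show ?thesis using s1 iv unfolding D_def by (auto simp: prod_eq_iff)
    qed
  qed
  have bound: "fst m \<le> p \<and> snd m \<le> p" if "m \<in> inv_gens p b" for m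
  proof -
    have "\<not> fst m > p"
    proof
      assume "fst m > p" then have "m = A" using gen_eq[OF that nA] unfolding A_def by simp
      then show False using \<open>fst m > p\<close> unfolding A_def by simp
    qed
    moreover have "\<not> snd m > p"
    proof
      assume "snd m > p" then have "m = B" using gen_eq[OF that nB] unfolding B_def by simp
      then show False using \<open>snd m > p\<close> unfolding B_def by simp
    qed
    ultimately show ?thesis by simp
  qed
  have finG: "finite (inv_gens p b)"
  proof (rule finite_subset)
    show "inv_gens p b \<subseteq> {..p} \<times> {..p}" using bound by (auto simp: mem_Times_iff)
  qed auto
  define W where "W = (\<lambda>m. nonconst_inv p b m \<and> 0 < fst m \<and> fst m < u \<and> 0 < snd m \<and> snd m < v)"
  have cover: "fst m \<ge> p \<or> snd m \<ge> p \<or> (fst m \<ge> u \<and> snd m \<ge> 1) \<or> (fst m \<ge> 1 \<and> snd m \<ge> v) \<or> W m"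
    if m: "nonconst_inv p b m" for m
  proof -
    have dv: "int p dvd int (fst m) + int b * int (snd m)" and nz: "m \<noteq> (0,0)"
      using m unfolding nonconst_inv_def inv_iff by auto
    show ?thesis
    proof (cases "fst m = 0")
      case True
      then have "snd m \<ge> p" using bd0[of "snd m"] dv nz by (cases "snd m < p") (auto simp: prod_eq_iff)
      then show ?thesis by simp
    next
      case F1: False
      show ?thesis
      proof (cases "snd m = 0")
        case True
        then have "int p dvd int (fst m)" "0 < int (fst m)" using dv F1 by auto
        then have "int p \<le> int (fst m)" by (rule zdvd_imp_le)
        then show ?thesis by simp
      next
        case False
        then show ?thesis using F1 m unfolding W_def by auto
      qed
    qed
  qed
  have sub: "inv_gens p b \<subseteq> {A,B,C,D}" if noW: "\<And>m. \<not> W m"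
  proof
    fix m assume mG: "m \<in> inv_gens p b"
    then have m: "nonconst_inv p b m" unfolding inv_gens_def by auto
    from cover[OF m] noW[of m] show "m \<in> {A,B,C,D}"
    proof (elim disjE)
      assume "p \<le> fst m" then show ?thesis using gen_eq[OF mG nA] unfolding A_def by auto
    next
      assume "p \<le> snd m" then show ?thesis using gen_eq[OF mG nB] unfolding B_def by auto
    next
      assume "u \<le> fst m \<and> 1 \<le> snd m" then show ?thesis using gen_eq[OF mG nC] unfolding C_def by auto
    next
      assume "1 \<le> fst m \<and> v \<le> snd m" then show ?thesis using gen_eq[OF mG nD] unfolding D_def by auto
    qed simp
  qed
  obtain k where k: "int u * int v = 1 + int p * k" using uv by blast
  have cond: "(int p - int b) * (int p - int binv) = int u * int v" using iu iv by simp
  have N1: "\<not> W m" if "int u * int v = int p + 1" for m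
  proof
    assume Wm: "W m"
    define c where "c = fst m"
    define d where "d = snd m"
    have dv: "int p dvd int c + int b * int d" and c: "0 < c" "c < u" and d: "0 < d" "d < v"
      using Wm unfolding W_def nonconst_inv_def inv_iff c_def d_def by auto
    have "int binv * (int c + int b * int d) = int binv * int c + (int b * int binv) * int d"
      by (simp add: algebra_simps)
    also have "\<dots> = int p * (int c + t * int d) - (int c * int v - int d)"
    proof -
      have ib: "int binv = int p - int v" using iv by simp
      show ?thesis unfolding t by (simp add: algebra_simps ib)
    qed
    finally have e: "int c * int v - int d = int p * (int c + t * int d) - int binv * (int c + int b * int d)"
      by simp
    have "int p dvd int c * int v - int d" unfolding e using dv by (intro dvd_diff) auto
    have h1: "int c * int v \<le> (int u - 1) * int v" using c by (intro mult_right_mono) auto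
    have h2: "int c * int v \<ge> 1 * int v" using c by (intro mult_right_mono) auto
    have h3: "(int u - 1) * int v = int p + 1 - int v" using that by (simp add: algebra_simps)
    have h4: "\<bar>int c * int v - int d\<bar> < int p" using h1 h2 h3 d v1 unfolding abs_less_iff by linarith
    have "int c * int v - int d = 0" by (rule dvd_small[OF \<open>int p dvd int c * int v - int d\<close> h4])
    then have "int c * int v < int v" using d by simp
    then show False using h2 by linarith
  qed
  have uv1: "u = 1 \<longleftrightarrow> v = 1"
  proof
    assume "u = 1"
    then have "int v - 1 = int p * k" using k by simp
    then have "int p dvd int v - 1" by simp
    moreover have "\<bar>int v - 1\<bar> < int p" using v1 by simp
    ultimately have "int v - 1 = 0" by (rule dvd_small)
    then show "v = 1" by simp
  next
    assume "v = 1"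
    then have "int u - 1 = int p * k" using k by simp
    then have "int p dvd int u - 1" by simp
    moreover have "\<bar>int u - 1\<bar> < int p" using u1 by simp
    ultimately have "int u - 1 = 0" by (rule dvd_small)
    then show "u = 1" by simp
  qed
  show ?thesis
  proof (cases "u = 1")
    case True
    then have v1': "v = 1" using uv1 by simp
    have "\<not> W m" for m unfolding W_def using True by auto
    then have "inv_gens p b \<subseteq> {A,B,C}" using sub True v1' unfolding C_def D_def by auto
    then have "card (inv_gens p b) \<le> card {A,B,C}" by (intro card_mono) auto
    also have "\<dots> \<le> 3" by (auto simp: card_insert_if)
    finally have "card (inv_gens p b) \<noteq> 4" by simp
    moreover have "int u * int v \<noteq> int p + 1" using True v1' p1 by simp
    ultimately show ?thesis using cond by simp
  next
    case False
    then have u2: "u \<ge> 2" and v2: "v \<ge> 2" using uv1 u1 v1 by auto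
    have dist: "A \<noteq> B" "A \<noteq> C" "A \<noteq> D" "B \<noteq> C" "B \<noteq> D" "C \<noteq> D"
      unfolding A_def B_def C_def D_def using p1 u1 v1 u2 by auto
    show ?thesis
    proof (cases "int u * int v = int p + 1")
      case True
      have "inv_gens p b = {A,B,C,D}" using sub N1[OF True] gA gB gC gD by blast
      then have "card (inv_gens p b) = 4" using dist by simp
      then show ?thesis using True cond by simp
    next
      case False
      have k2: "k \<ge> 2"
      proof -
        have "int u * int v \<ge> 2 * 2" using u2 v2 by (intro mult_mono) auto
        then have "int p * k > 0" using k by simp
        then have "k > 0" using p1 by (simp add: zero_less_mult_iff)
        moreover have "k \<noteq> 1" using False k by auto
        ultimately show ?thesis by simp
      qed
      have big: "int u * int v \<ge> 2 * int p + 1"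
      proof -
        have "int p * k \<ge> int p * 2" using k2 p1 by (intro mult_left_mono) auto
        then show ?thesis using k by simp
      qed
      define r where "r = p mod v"
      have r0: "r \<noteq> 0"
      proof
        assume "r = 0"
        then have "v dvd p" unfolding r_def by auto
        then show False using assms(1) v2 v1 unfolding prime_nat_iff by auto
      qed
      have rv: "r < v" unfolding r_def using v2 by simp
      define c where "c = p div v + 1"
      define d where "d = v - r"
      have vc: "int v * int c = int p + int d"
      proof -
        have "v * (p div v) + r = p" unfolding r_def by simp
        then have "int v * int (p div v) + int r = int p" by (metis of_nat_add of_nat_mult)
        then show ?thesis unfolding c_def d_def using rv by (simp add: algebra_simps of_nat_diff)
      qed
      have cu: "c < u"
      proof -
        have dle: "int d \<le> int v" unfolding d_def by simp
        have "int v * int c = int v * int (p div v) + int v" unfolding c_def by (simp add: algebra_simps)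
        then have "int v * int (p div v) \<le> int p" using vc dle by linarith
        also have "int p < int v * (int u - 1)" using big v1 by (simp add: algebra_simps)
        finally have "int (p div v) < int u - 1" by (simp add: mult_less_cancel_left)
        then show ?thesis unfolding c_def by simp
      qed
      have dv: "0 < d" "d < v" unfolding d_def using r0 rv by auto
      have Wcd: "W (c, d)"
      proof -
        have "int c + int b * int d = int c * (1 + int b * int v) - int b * int p"
          using vc by (simp add: algebra_simps)
        also have "\<dots> = int p * (int c * (int b - t) - int b)" unfolding bv by (simp add: algebra_simps)
        finally have "int p dvd int c + int b * int d" by simp
        then show ?thesis unfolding W_def nonconst_inv_def inv_iff using cu dv c_def by auto
      qed
      define S where "S = (\<lambda>X. nonconst_inv p b X \<and> fst X \<le> c \<and> snd X \<le> d)"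
      have "S (c,d)" using Wcd unfolding S_def W_def by auto
      from ex_has_least_nat[of S "(c,d)" "\<lambda>X. fst X + snd X", OF this]
      obtain X where X: "S X" and Xmin: "\<And>Y. S Y \<Longrightarrow> fst X + snd X \<le> fst Y + snd Y" by blast
      have gX: "X \<in> inv_gens p b"
      proof (rule min_gen)
        show "nonconst_inv p b X" using X unfolding S_def by simp
      next
        fix Y assume Y: "nonconst_inv p b Y" "fst Y \<le> fst X" "snd Y \<le> snd X"
        then have "S Y" using X unfolding S_def by auto
        then have "fst X + snd X \<le> fst Y + snd Y" by (rule Xmin)
        then show "Y = X" using Y(2,3) by (auto simp: prod_eq_iff)
      qed
      have distX: "X \<noteq> A" "X \<noteq> B" "X \<noteq> C" "X \<noteq> D"
        using X cu dv u1 v1 unfolding S_def A_def B_def C_def D_def by auto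
      have "{A,B,C,D,X} \<subseteq> inv_gens p b" using gA gB gC gD gX by auto
      then have "card {A,B,C,D,X} \<le> card (inv_gens p b)" by (intro card_mono finG)
      moreover have "card {A,B,C,D,X} = 5" using dist distX by auto
      ultimately have "card (inv_gens p b) \<noteq> 4" by simp
      then show ?thesis using False cond by simp
    qed
  qed
qed

end
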